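(* Let $\Sigma$ be a compact hyperbolic surface and $M=U\times\mathbf{R}$ with $\alpha=(\theta+dt)\wedge(\sinh t\,\omega-\cosh t\,\eta)$. If $f\in C^\infty(M)$ satisfies $d_Af=0$, i.e. $Xf+\tanh t\,Zf=0$ and $Yf-\partial_tf=0$, then $f$ is constant. Thus $H^0_A\cong\mathbf{R}$.
   Context: Let $\Sigma$ be a compact oriented surface with a Riemannian metric of constant curvature $-1$, $\pi:U\to\Sigma$ its unit circle bundle, with canonical frame $X$ (geodesic flow), $Y$ (horizontal lift of $Ie$ at $e$, $I$ rotation by $+\pi/2$), $Z$ (positive fibre rotation) and dual coframe $\omega,\theta,\eta$, satisfying $[Z,X]=Y$, $[Z,Y]=-X$, $[X,Y]=-Z$, $d\omega=\eta\wedge\theta$, $d\theta=-\eta\wedge\omega$, $d\eta=\omega\wedge\theta$. On $M=U\times\mathbf{R}$ (fibred over $\Sigma$ by $(e,t)\mapsto\pi(e)$) the form $\alpha=d(\cosh t\,\omega-\sinh t\,\eta)=(\theta+dt)\wedge(\sinh t\,\omega-\cosh t\,\eta)$ is closed, decomposable and nondegenerate on fibres; it defines a flat symplectic connection. Here $H^*=\mathrm{span}(\omega,\theta)$ (annihilator of the vertical bundle spanned by $Z,\partial_t$), and for $f\in C^\infty(M)$, $d_Af=(Xf+\tanh t\,Zf)\omega+(Yf-\partial_tf)\theta$. *)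

theory Defs
  imports "HOL-Analysis.Analysis"
begin

primrec Ck_on :: "nat \<Rightarrow> 'a::real_normed_vector set \<Rightarrow> ('a \<Rightarrow> real) \<Rightarrow> bool" where
  "Ck_on 0 S f = continuous_on S f"
| "Ck_on (Suc k) S f =
     (f differentiable_on S \<and> (\<forall>v. Ck_on k S (\<lambda>x. frechet_derivative f (at x) v)))"

definition Cinf_on :: "'a::real_normed_vector set \<Rightarrow> ('a \<Rightarrow> real) \<Rightarrow> bool" where
  "Cinf_on S f \<longleftrightarrow> (\<forall>k. Ck_on k S f)"

definition dderiv :: "('a::real_normed_vector \<Rightarrow> real) \<Rightarrow> 'a \<Rightarrow> 'a \<Rightarrow> real" where
  "dderiv f p v = frechet_derivative f (at p) v"

definition upper_half :: "complex set" where
  "upper_half = {z. Im z > 0}"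

definition SL2 :: "(real^2^2) set" where
  "SL2 = {g. det g = 1}"

definition mob :: "real^2^2 \<Rightarrow> complex \<Rightarrow> complex" where
  "mob g z = (of_real (g$1$1) * z + of_real (g$1$2)) / (of_real (g$2$1) * z + of_real (g$2$2))"

text \<open>Automorphy factor c z + d; the derivative of mob g at z is 1/(cz+d)^2.\<close>
definition jfac :: "real^2^2 \<Rightarrow> complex \<Rightarrow> complex" where
  "jfac g z = of_real (g$2$1) * z + of_real (g$2$2)"

text \<open>A cocompact torsion-free discrete subgroup of SL(2,R) (acting freely on H
  modulo +-1): then Gamma\H is a compact oriented hyperbolic surface, and every
  such surface arises this way.\<close>
definition cocompact_fuchsian :: "(real^2^2) set \<Rightarrow> bool" where
  "cocompact_fuchsian \<Gamma> \<longleftrightarrow>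
     \<Gamma> \<subseteq> SL2 \<and> mat 1 \<in> \<Gamma> \<and>
     (\<forall>g\<in>\<Gamma>. \<forall>h\<in>\<Gamma>. g ** h \<in> \<Gamma>) \<and>
     (\<forall>g\<in>\<Gamma>. matrix_inv g \<in> \<Gamma>) \<and>
     (\<exists>e>0. \<forall>g\<in>\<Gamma>. g \<noteq> mat 1 \<longrightarrow> dist g (mat 1) \<ge> e) \<and>
     (\<forall>g\<in>\<Gamma>. g \<noteq> mat 1 \<and> g \<noteq> - mat 1 \<longrightarrow> (\<forall>z\<in>upper_half. mob g z \<noteq> z)) \<and>
     (\<exists>K. compact K \<and> K \<subseteq> upper_half \<and> (\<forall>z\<in>upper_half. \<exists>g\<in>\<Gamma>. mob g z \<in> K))"

text \<open>A point (z, phi, t): z in H, phi the (Euclidean) angle of the unit tangent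
  vector y*cis phi at z, t in R.  Functions on M = U(Gamma\H) x R are functions
  on this domain invariant under the induced action of Gamma (which includes the
  2 pi periodicity in phi).\<close>
definition Mdom :: "(complex \<times> real \<times> real) set" where
  "Mdom = {(z, \<phi>, t). Im z > 0}"

definition Gamma_invariant :: "(real^2^2) set \<Rightarrow> (complex \<times> real \<times> real \<Rightarrow> real) \<Rightarrow> bool" where
  "Gamma_invariant \<Gamma> f \<longleftrightarrow>
     (\<forall>g\<in>\<Gamma>. \<forall>z \<phi> \<phi>' t. Im z > 0 \<longrightarrow>
        cis \<phi>' = cis \<phi> * cnj (jfac g z) / jfac g z \<longrightarrow>
        f (mob g z, \<phi>', t) = f (z, \<phi>, t))"

text \<open>Canonical frame: X geodesic flow, Y = [Z,X], Z = fibre rotation, and d/dt.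
  These satisfy [Z,X]=Y, [Z,Y]=-X, [X,Y]=-Z.\<close>
definition Xv :: "complex \<times> real \<times> real \<Rightarrow> complex \<times> real \<times> real" where
  "Xv p = (case p of (z, \<phi>, t) \<Rightarrow> (of_real (Im z) * cis \<phi>, - cos \<phi>, 0))"

definition Yv :: "complex \<times> real \<times> real \<Rightarrow> complex \<times> real \<times> real" where
  "Yv p = (case p of (z, \<phi>, t) \<Rightarrow> (of_real (Im z) * \<i> * cis \<phi>, sin \<phi>, 0))"

definition Zv :: "complex \<times> real \<times> real" where
  "Zv = (0, 1, 0)"

definition Tv :: "complex \<times> real \<times> real" where
  "Tv = (0, 0, 1)"

end

theory Submission
  imports Defs
begin


locale hyp7 =
  fixes \<Gamma> :: "(real^2^2) set" and f :: "complex \<times> real \<times> real \<Rightarrow> real"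
  assumes cf: "cocompact_fuchsian \<Gamma>"
    and sm: "Cinf_on Mdom f"
    and gi: "Gamma_invariant \<Gamma> f"
    and pde1: "\<forall>p\<in>Mdom. dderiv f p (Xv p) + tanh (snd (snd p)) * dderiv f p Zv = 0"
    and pde2: "\<forall>p\<in>Mdom. dderiv f p (Yv p) - dderiv f p Tv = 0"

lemma Mdom_iff: "p \<in> Mdom \<longleftrightarrow> Im (fst p) > 0"
  by (cases p) (auto simp: Mdom_def)

lemma open_Mdom: "open Mdom"
proof -
  have "Mdom = {p. 0 < Im (fst p)}" by (auto simp: Mdom_iff)
  moreover have "open {p::complex\<times>real\<times>real. 0 < Im (fst p)}"
    by (intro open_Collect_less continuous_intros)
  ultimately show ?thesis by simp
qed

context hyp7 begin

lemma f_cont: "continuous_on Mdom f"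
  using sm unfolding Cinf_on_def by (metis Ck_on.simps(1))

lemma f_diff: "p \<in> Mdom \<Longrightarrow> f differentiable (at p)"
proof -
  assume p: "p \<in> Mdom"
  have "f differentiable_on Mdom" using sm unfolding Cinf_on_def by (metis Ck_on.simps(2))
  then show ?thesis using p open_Mdom differentiable_on_eq_differentiable_at by blast
qed

lemma chain:
  assumes "(\<gamma> has_vector_derivative v) (at s)" "\<gamma> s \<in> Mdom"
  shows "((f \<circ> \<gamma>) has_real_derivative dderiv f (\<gamma> s) v) (at s)"
proof -
  let ?F = "frechet_derivative f (at (\<gamma> s))"
  have fd: "(f has_derivative ?F) (at (\<gamma> s))"
    using f_diff[OF assms(2)] frechet_derivative_works by blast
  have lin: "linear ?F" using f_diff[OF assms(2)] linear_frechet_derivative by blast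
  have gd: "(\<gamma> has_derivative (\<lambda>h. h *\<^sub>R v)) (at s)"
    using assms(1) by (simp add: has_vector_derivative_def)
  have "((f \<circ> \<gamma>) has_derivative (?F \<circ> (\<lambda>h. h *\<^sub>R v))) (at s)"
    by (rule diff_chain_at[OF gd fd])
  moreover have "?F \<circ> (\<lambda>h. h *\<^sub>R v) = (*) (?F v)"
    by (rule ext) (simp add: linear_cmul[OF lin])
  ultimately show ?thesis
    by (simp add: has_field_derivative_def dderiv_def)
qed

lemma dd_zero:
  assumes "p \<in> Mdom" "A = 0 \<or> snd (snd p) = 0"
  shows "dderiv f p (A *\<^sub>R Xv p + B *\<^sub>R (Yv p - Tv)) = 0"
proof -
  let ?F = "frechet_derivative f (at p)"
  have lin: "linear ?F" using f_diff[OF assms(1)] linear_frechet_derivative by blast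
  have "dderiv f p (A *\<^sub>R Xv p + B *\<^sub>R (Yv p - Tv)) = A * dderiv f p (Xv p) + B * (dderiv f p (Yv p) - dderiv f p Tv)"
    unfolding dderiv_def by (simp add: linear_cmul[OF lin] linear_add[OF lin] linear_diff[OF lin])
  also have "\<dots> = A * dderiv f p (Xv p)" using pde2 assms(1) by simp
  also have "\<dots> = 0" using assms pde1 by auto
  finally show ?thesis .
qed

lemma flow_const:
  assumes "\<And>s. \<gamma> s \<in> Mdom"
    and "\<And>s. (\<gamma> has_vector_derivative (A s *\<^sub>R Xv (\<gamma> s) + B s *\<^sub>R (Yv (\<gamma> s) - Tv))) (at s)"
    and "\<And>s. A s = 0 \<or> snd (snd (\<gamma> s)) = 0"
  shows "f (\<gamma> a) = f (\<gamma> b)"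
proof -
  have "\<forall>s. ((f \<circ> \<gamma>) has_real_derivative 0) (at s)"
    using chain[OF assms(2) assms(1)] dd_zero[OF assms(1) assms(3)] by metis
  from DERIV_isconst_all[OF this] show ?thesis by simp
qed

lemma mat1_simps: "mob (mat 1) z = z" "jfac (mat 1) z = 1"
  by (simp_all add: mob_def jfac_def mat_def)

lemma mat1_in: "mat 1 \<in> \<Gamma>" using cf by (simp add: cocompact_fuchsian_def)

lemma periodic:
  assumes "Im z > 0" "cis \<phi>' = cis \<phi>"
  shows "f (z, \<phi>', t) = f (z, \<phi>, t)"
  using gi mat1_in assms unfolding Gamma_invariant_def
  by (metis mat1_simps complex_cnj_one div_by_1 mult.right_neutral)

end


definition mb :: "real \<Rightarrow> real \<Rightarrow> real \<Rightarrow> real \<Rightarrow> complex \<Rightarrow> complex" where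
  "mb a b c d z = (of_real a * z + of_real b) / (of_real c * z + of_real d)"
definition jf :: "real \<Rightarrow> real \<Rightarrow> complex \<Rightarrow> complex" where
  "jf c d z = of_real c * z + of_real d"

lemma Im_jf: "Im (jf c d z) = c * Im z" by (simp add: jf_def)

lemma jf_nz: assumes "a*d - b*c = 1" "Im z > 0" shows "jf c d z \<noteq> 0"
proof (cases "c = 0")
  case True then have "d \<noteq> 0" using assms(1) by auto
  then show ?thesis using True by (simp add: jf_def)
next
  case False then have "Im (jf c d z) \<noteq> 0" using assms(2) by (simp add: Im_jf)
  then show ?thesis by auto
qed

lemma Im_div_cnj: "Im (w / j) = Im (w * cnj j) / (cmod j)^2"
  by (simp add: Im_divide cmod_power2)

lemma Im_mb: assumes "a*d - b*c = 1" "Im z > 0"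
  shows "Im (mb a b c d z) = Im z / (cmod (jf c d z))^2"
proof -
  obtain x y where z: "z = Complex x y" by (cases z)
  have "Im ((of_real a * z + of_real b) * cnj (jf c d z)) = (a*d - b*c) * Im z"
    using z by (simp add: jf_def algebra_simps)
  then show ?thesis unfolding mb_def jf_def[symmetric] Im_div_cnj using assms(1) by simp
qed

lemma mb_diff: assumes "a*d - b*c = 1" "Im z1 > 0" "Im z2 > 0"
  shows "mb a b c d z2 - mb a b c d z1 = (z2 - z1) / (jf c d z1 * jf c d z2)"
proof -
  have n1: "jf c d z1 \<noteq> 0" and n2: "jf c d z2 \<noteq> 0" using jf_nz assms by auto
  have e: "of_real a * of_real d - of_real b * of_real c = (1::complex)"
    by (metis assms(1) of_real_1 of_real_diff of_real_mult)
  have num: "(of_real a * z2 + of_real b) * jf c d z1 - (of_real a * z1 + of_real b) * jf c d z2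
      = (of_real a * of_real d - of_real b * of_real c) * (z2 - z1)"
    unfolding jf_def by (simp add: algebra_simps)
  have "mb a b c d z2 - mb a b c d z1 = ((of_real a * z2 + of_real b) * jf c d z1 - (of_real a * z1 + of_real b) * jf c d z2) / (jf c d z2 * jf c d z1)"
    unfolding mb_def jf_def[symmetric] using n1 n2 by (simp add: diff_frac_eq)
  also have "\<dots> = (z2 - z1) / (jf c d z1 * jf c d z2)" unfolding num e by (simp add: mult.commute)
  finally show ?thesis .
qed

lemma mb_deriv: assumes "a*d - b*c = 1" "Im z > 0"
  shows "(mb a b c d has_field_derivative 1 / (jf c d z)^2) (at z)"
proof -
  have nz: "jf c d z \<noteq> 0" using jf_nz[OF assms] .
  have e: "of_real a * of_real d - of_real b * of_real c = (1::complex)"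
    by (metis assms(1) of_real_1 of_real_diff of_real_mult)
  have "((\<lambda>z. (of_real a * z + of_real b) / (of_real c * z + of_real d)) has_field_derivative
     ((of_real a * (of_real c * z + of_real d) - (of_real a * z + of_real b) * of_real c) / (of_real c * z + of_real d)^2)) (at z)"
    using nz unfolding jf_def
    by (auto intro!: derivative_eq_intros simp: power2_eq_square)
  moreover have "(of_real a * (of_real c * z + of_real d) - (of_real a * z + of_real b) * of_real c) = (1::complex)"
    using e by (simp add: algebra_simps)
  ultimately show ?thesis unfolding mb_def jf_def[symmetric] by (simp add: jf_def)
qed

lemma key_re: assumes "j \<noteq> 0"
  shows "Re v + 2 * Im j * Im (v / j) = Re (v * cnj j / j)"
proof -
  obtain p q where j: "j = Complex p q" by (cases j)
  obtain m n where v: "v = Complex m n" by (cases v)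
  have "p^2 + q^2 \<noteq> 0" using assms j by (auto simp: complex_eq_iff)
  then show ?thesis using j v by (simp add: Im_divide Re_divide field_simps power2_eq_square)
qed

lemma nsq: "(of_real (cmod j))^2 = j * cnj j" "of_real (cmod j) * of_real (cmod j) = j * cnj j"
  by (metis complex_norm_square of_real_power) (metis complex_norm_square of_real_power power2_eq_square)

lemma cis_shift: assumes "j \<noteq> 0"
  shows "cis (\<phi> - 2 * Im (Ln j)) = cis \<phi> * cnj j / j"
proof -
  have a: "Im (Ln j) = Arg j" using Arg_eq_Im_Ln[OF assms] by simp
  have s: "cis (Arg j) = j / of_real (cmod j)" using cis_Arg[OF assms] by (simp add: sgn_div_norm scaleR_conv_of_real divide_inverse mult.commute)
  have d2: "(cis (Arg j))^2 = cis (2 * Arg j)" using Complex.DeMoivre[of "Arg j" 2] by simp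
  have "cis (\<phi> - 2 * Arg j) = cis \<phi> / (cis (Arg j))^2"
    by (simp add: d2 cis_divide)
  also have "\<dots> = cis \<phi> * cnj j / j"
    using assms by (simp add: s power_divide nsq field_simps power2_eq_square)
  finally show ?thesis using a by simp
qed



definition Ls :: "real \<Rightarrow> real \<Rightarrow> real \<Rightarrow> real \<Rightarrow> complex \<times> real \<times> real \<Rightarrow> complex \<times> real \<times> real" where
  "Ls a b c d p = (mb a b c d (fst p), fst (snd p) - 2 * Im (Ln (jf c d (fst p))), snd (snd p))"

lemma jf_notnonpos: assumes "a*d - b*c = 1" "c > 0 \<or> (c = 0 \<and> d > 0)" "Im z > 0"
  shows "jf c d z \<notin> \<real>\<^sub>\<le>\<^sub>0"
proof (cases "c = 0")
  case True then show ?thesis using assms by (auto simp: jf_def complex_nonpos_Reals_iff)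
next
  case False then have "Im (jf c d z) > 0" using assms by (simp add: Im_jf)
  then show ?thesis by (auto simp: complex_nonpos_Reals_iff)
qed

lemma hvd_fst: "(g has_vector_derivative v) F \<Longrightarrow> ((\<lambda>x. fst (g x)) has_vector_derivative fst v) F"
  by (rule bounded_linear.has_vector_derivative[OF bounded_linear_fst])
lemma hvd_snd: "(g has_vector_derivative v) F \<Longrightarrow> ((\<lambda>x. snd (g x)) has_vector_derivative snd v) F"
  by (rule bounded_linear.has_vector_derivative[OF bounded_linear_snd])

lemma comps:
  "fst (A *\<^sub>R Xv (z0, \<phi>0, t0) + B *\<^sub>R Yv (z0, \<phi>0, t0) + E *\<^sub>R Tv) = (of_real A + \<i> * of_real B) * of_real (Im z0) * cis \<phi>0"
  "fst (snd (A *\<^sub>R Xv (z0, \<phi>0, t0) + B *\<^sub>R Yv (z0, \<phi>0, t0) + E *\<^sub>R Tv)) = - A * cos \<phi>0 + B * sin \<phi>0"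
  "snd (snd (A *\<^sub>R Xv (z0, \<phi>0, t0) + B *\<^sub>R Yv (z0, \<phi>0, t0) + E *\<^sub>R Tv)) = E"
  by (simp_all add: Xv_def Yv_def Tv_def scaleR_conv_of_real algebra_simps)

lemma push:
  assumes det: "a*d - b*c = 1" and nrm: "c > 0 \<or> (c = 0 \<and> d > 0)"
    and hv: "(\<gamma> has_vector_derivative (A *\<^sub>R Xv (\<gamma> s) + B *\<^sub>R Yv (\<gamma> s) + E *\<^sub>R Tv)) (at s)"
    and dom: "Im (fst (\<gamma> s)) > 0"
  shows "((\<lambda>s. Ls a b c d (\<gamma> s)) has_vector_derivative
     (A *\<^sub>R Xv (Ls a b c d (\<gamma> s)) + B *\<^sub>R Yv (Ls a b c d (\<gamma> s)) + E *\<^sub>R Tv)) (at s)"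
proof -
  obtain z0 \<phi>0 t0 where g: "\<gamma> s = (z0, \<phi>0, t0)" by (cases "\<gamma> s") auto
  have z0: "Im z0 > 0" using dom g by simp
  define v where "v = A *\<^sub>R Xv (\<gamma> s) + B *\<^sub>R Yv (\<gamma> s) + E *\<^sub>R Tv"
  define j where "j = jf c d z0"
  define w where "w = (of_real A + \<i> * of_real B) * cis \<phi>0"
  have jnz: "j \<noteq> 0" using jf_nz[OF det z0] by (simp add: j_def)
  have jnp: "j \<notin> \<real>\<^sub>\<le>\<^sub>0" using jf_notnonpos[OF det nrm z0] by (simp add: j_def)
  have v1: "fst v = w * of_real (Im z0)" and v2: "fst (snd v) = - A * cos \<phi>0 + B * sin \<phi>0"
    and v3: "snd (snd v) = E"
    unfolding v_def g comps w_def by (simp_all add: algebra_simps)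
  have dz: "((\<lambda>s. fst (\<gamma> s)) has_vector_derivative fst v) (at s)"
    using hvd_fst[OF hv] by (simp add: v_def)
  have dp: "((\<lambda>s. fst (snd (\<gamma> s))) has_vector_derivative fst (snd v)) (at s)"
    using hvd_fst[OF hvd_snd[OF hv]] by (simp add: v_def)
  have dt: "((\<lambda>s. snd (snd (\<gamma> s))) has_vector_derivative snd (snd v)) (at s)"
    using hvd_snd[OF hvd_snd[OF hv]] by (simp add: v_def)
  have md: "(mb a b c d has_field_derivative 1 / j^2) (at (fst (\<gamma> s)))"
    using mb_deriv[OF det z0] g by (simp add: j_def)
  have dZ: "((\<lambda>s. mb a b c d (fst (\<gamma> s))) has_vector_derivative fst v / j^2) (at s)"
    using field_vector_diff_chain_at[OF dz md] by (simp add: o_def)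
  have jd: "(jf c d has_field_derivative of_real c) (at (fst (\<gamma> s)))"
    unfolding jf_def[abs_def] by (auto intro!: derivative_eq_intros)
  have dJ: "((\<lambda>s. jf c d (fst (\<gamma> s))) has_vector_derivative fst v * of_real c) (at s)"
    using field_vector_diff_chain_at[OF dz jd] by (simp add: o_def)
  have lnd: "(Ln has_field_derivative inverse j) (at (jf c d (fst (\<gamma> s))))"
    using has_field_derivative_Ln[OF jnp] g by (simp add: j_def)
  have dL: "((\<lambda>s. Ln (jf c d (fst (\<gamma> s)))) has_vector_derivative fst v * of_real c * inverse j) (at s)"
    using field_vector_diff_chain_at[OF dJ lnd] by (simp add: o_def)
  have dI: "((\<lambda>s. Im (Ln (jf c d (fst (\<gamma> s))))) has_real_derivative Im (fst v * of_real c * inverse j)) (at s)"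
    using bounded_linear.has_vector_derivative[OF bounded_linear_Im dL]
    by (simp add: has_real_derivative_iff_has_vector_derivative)
  have dp': "((\<lambda>s. fst (snd (\<gamma> s))) has_real_derivative fst (snd v)) (at s)"
    using dp by (simp add: has_real_derivative_iff_has_vector_derivative)
  have dP: "((\<lambda>s. fst (snd (\<gamma> s)) - 2 * Im (Ln (jf c d (fst (\<gamma> s))))) has_real_derivative
      fst (snd v) - 2 * Im (fst v * of_real c * inverse j)) (at s)"
    by (rule DERIV_diff[OF dp' DERIV_cmult[OF dI]])
  have all: "((\<lambda>s. Ls a b c d (\<gamma> s)) has_vector_derivative
      (fst v / j^2, fst (snd v) - 2 * Im (fst v * of_real c * inverse j), snd (snd v))) (at s)"
    unfolding Ls_def
    by (intro has_vector_derivative_Pair dZ dt dP[unfolded has_real_derivative_iff_has_vector_derivative])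
  define \<psi>0 where "\<psi>0 = \<phi>0 - 2 * Im (Ln j)"
  have cs: "cis \<psi>0 = cis \<phi>0 * cnj j / j" unfolding \<psi>0_def by (rule cis_shift[OF jnz])
  have Lg: "Ls a b c d (\<gamma> s) = (mb a b c d z0, \<psi>0, t0)"
    by (simp add: Ls_def g \<psi>0_def j_def)
  have Imw: "Im (mb a b c d z0) = Im z0 / (cmod j)^2" using Im_mb[OF det z0] by (simp add: j_def)
  have jj: "(of_real (cmod j))^2 = j * cnj j" by (rule nsq)
  have e1: "fst v / j^2 = (of_real A + \<i> * of_real B) * of_real (Im (mb a b c d z0)) * cis \<psi>0"
    unfolding v1 Imw cs w_def using jnz
    by (simp add: nsq field_simps power2_eq_square)
  have Imj: "Im j = c * Im z0" by (simp add: j_def Im_jf)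
  have e2a: "fst v * of_real c * inverse j = of_real (Im j) * (w / j)"
    unfolding v1 Imj by (simp add: field_simps)
  have imr: "\<And>r u. Im (of_real r * u) = r * Im u" by simp
  have e2b: "Im (of_real (Im j) * (w / j)) = Im j * Im (w / j)" by (rule imr)
  have rw: "Re w = A * cos \<phi>0 - B * sin \<phi>0" by (simp add: w_def)
  have rw2: "Re (w * cnj j / j) = A * cos \<psi>0 - B * sin \<psi>0"
  proof -
    have "w * cnj j / j = (of_real A + \<i> * of_real B) * cis \<psi>0" by (simp add: w_def cs)
    then show ?thesis by simp
  qed
  have e2: "fst (snd v) - 2 * Im (fst v * of_real c * inverse j) = - A * cos \<psi>0 + B * sin \<psi>0"
    using key_re[OF jnz, of w] unfolding v2 e2a e2b rw rw2 by simp
  have tgt: "A *\<^sub>R Xv (Ls a b c d (\<gamma> s)) + B *\<^sub>R Yv (Ls a b c d (\<gamma> s)) + E *\<^sub>R Tv =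
      (fst v / j^2, fst (snd v) - 2 * Im (fst v * of_real c * inverse j), snd (snd v))"
    unfolding Lg using comps[of A "mb a b c d z0" \<psi>0 t0 B E] e1 e2 v3
    by (simp add: prod_eq_iff)
  show ?thesis using all tgt by simp
qed



definition act :: "real \<Rightarrow> real \<Rightarrow> real \<Rightarrow> real \<Rightarrow> complex \<times> complex \<Rightarrow> complex \<times> complex" where
  "act a b c d p = (mb a b c d (fst p), snd p * cnj (jf c d (fst p)) / jf c d (fst p))"

lemma act_neg: "act (-a) (-b) (-c) (-d) p = act a b c d p"
proof -
  have "mb (-a) (-b) (-c) (-d) z = mb a b c d z" for z
  proof -
    have "of_real (-a) * z + of_real (-b) = - (of_real a * z + of_real b)"
      "of_real (-c) * z + of_real (-d) = - (of_real c * z + of_real d)" by simp_all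
    then show ?thesis unfolding mb_def by (simp only: minus_divide_divide)
  qed
  moreover have "jf (-c) (-d) z = - jf c d z" for z unfolding jf_def by simp
  ultimately show ?thesis unfolding act_def by simp
qed

lemma normalize:
  assumes "a*d - b*c = 1"
  obtains a' b' c' d' where "a'*d' - b'*c' = 1" "c' > 0 \<or> (c' = 0 \<and> d' > 0)"
    "act a' b' c' d' = act a b c d"
proof (cases "c > 0 \<or> (c = 0 \<and> d > 0)")
  case True then show ?thesis using that assms by blast
next
  case False
  have "-c > 0 \<or> (-c = 0 \<and> -d > 0)"
  proof (cases "c = 0")
    case True then have "d \<noteq> 0" using assms by auto
    then show ?thesis using True False by auto
  qed (use False in auto)
  moreover have "(-a)*(-d) - (-b)*(-c) = 1" using assms by simp
  moreover have "act (-a) (-b) (-c) (-d) = act a b c d" using act_neg by blast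
  ultimately show ?thesis using that by blast
qed

lemma Im_mb_pos: "a*d - b*c = 1 \<Longrightarrow> Im z > 0 \<Longrightarrow> Im (mb a b c d z) > 0"
  using Im_mb[of a d b c z] jf_nz[of a d b c z] by simp

lemma norm_cnj_div: "j \<noteq> 0 \<Longrightarrow> cmod (cnj j / j) = 1"
  by (simp add: norm_divide)

context hyp7 begin

definition hh :: "complex \<times> complex \<Rightarrow> real" where
  "hh p = f (fst p, Arg (snd p), 0)"

lemma periodic2:
  assumes "Im z > 0" "cis \<phi> = u"
  shows "f (z, \<phi>, t) = f (z, Arg u, t)"
proof -
  have "u \<noteq> 0" using assms(2) by auto
  have "cmod u = 1" using assms(2) by auto
  then have "cis (Arg u) = u" using cis_Arg[OF \<open>u \<noteq> 0\<close>] by (simp add: sgn_div_norm)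
  then show ?thesis using periodic[OF assms(1), of "Arg u" \<phi> t] assms(2) by simp
qed

lemma Ls_point:
  assumes det: "a*d - b*c = 1" and z: "Im z > 0"
  shows "f (Ls a b c d (z, \<phi>, t)) = f (mb a b c d z, Arg (cis \<phi> * cnj (jf c d z) / jf c d z), t)"
proof -
  have "cis (\<phi> - 2 * Im (Ln (jf c d z))) = cis \<phi> * cnj (jf c d z) / jf c d z"
    by (rule cis_shift[OF jf_nz[OF det z]])
  from periodic2[OF Im_mb_pos[OF det z] this, of t] show ?thesis unfolding Ls_def by simp
qed

lemma vert_norm:
  assumes det: "a*d - b*c = 1" and nrm: "c > 0 \<or> (c = 0 \<and> d > 0)"
    and eps: "\<epsilon> = 1 \<or> \<epsilon> = -1" and Y: "Y1 > 0" "Y2 > 0"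
  shows "hh (act a b c d (of_real x + \<i> * of_real Y1, \<i> * of_real \<epsilon>)) =
         hh (act a b c d (of_real x + \<i> * of_real Y2, \<i> * of_real \<epsilon>))"
proof -
  define \<gamma> where "\<gamma> = (\<lambda>s::real. (of_real x + \<i> * of_real (exp s), \<epsilon> * (pi/2), 0::real))"
  have cisE: "cis (\<epsilon> * (pi/2)) = \<i> * of_real \<epsilon>" using eps by (auto simp: complex_eq_iff)
  have cosE: "cos (\<epsilon> * (pi/2)) = 0" using eps by auto
  have gd: "(\<gamma> has_vector_derivative (\<epsilon> *\<^sub>R Xv (\<gamma> s) + 0 *\<^sub>R Yv (\<gamma> s) + 0 *\<^sub>R Tv)) (at s)" for s
  proof -
    have "(\<gamma> has_vector_derivative (\<i> * of_real (exp s), 0, 0)) (at s)"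
      unfolding \<gamma>_def by (auto intro!: derivative_eq_intros has_vector_derivative_Pair simp: prod_eq_iff)
    moreover have "\<epsilon> *\<^sub>R Xv (\<gamma> s) + 0 *\<^sub>R Yv (\<gamma> s) + 0 *\<^sub>R Tv = (\<i> * of_real (exp s), 0, 0)"
      unfolding \<gamma>_def Xv_def using eps cisE cosE by (auto simp: scaleR_conv_of_real prod_eq_iff)
    ultimately show ?thesis by simp
  qed
  have gim: "Im (fst (\<gamma> s)) > 0" for s by (simp add: \<gamma>_def)
  let ?L = "\<lambda>s. Ls a b c d (\<gamma> s)"
  have Ld: "(?L has_vector_derivative (\<epsilon> *\<^sub>R Xv (?L s) + 0 *\<^sub>R (Yv (?L s) - Tv))) (at s)" for s
    using push[OF det nrm gd gim] by simp
  have Lm: "?L s \<in> Mdom" for s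
    using Im_mb_pos[OF det gim] by (simp add: Mdom_iff Ls_def)
  have Lt: "\<epsilon> = 0 \<or> snd (snd (?L s)) = 0" for s by (simp add: Ls_def \<gamma>_def)
  have fc: "f (?L (ln Y1)) = f (?L (ln Y2))"
    by (rule flow_const[of ?L "\<lambda>_. \<epsilon>" "\<lambda>_. 0", OF Lm Ld Lt])
  have pt: "f (?L (ln Y)) = hh (act a b c d (of_real x + \<i> * of_real Y, \<i> * of_real \<epsilon>))" if "Y > 0" for Y
  proof -
    let ?z = "of_real x + \<i> * of_real Y"
    have zi: "Im ?z > 0" using that by simp
    have "?L (ln Y) = Ls a b c d (?z, \<epsilon> * (pi/2), 0)"
      using that by (simp add: \<gamma>_def)
    then have "f (?L (ln Y)) = f (mb a b c d ?z, Arg (cis (\<epsilon> * (pi/2)) * cnj (jf c d ?z) / jf c d ?z), 0)"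
      using Ls_point[OF det zi, of "\<epsilon> * (pi/2)" 0] by simp
    also have "\<dots> = hh (act a b c d (?z, \<i> * of_real \<epsilon>))"
      unfolding cisE hh_def act_def by simp
    finally show ?thesis .
  qed
  show ?thesis using fc pt[OF Y(1)] pt[OF Y(2)] by simp
qed

lemma vert:
  assumes det: "a*d - b*c = 1"
    and eps: "\<epsilon> = 1 \<or> \<epsilon> = -1" and Y: "Y1 > 0" "Y2 > 0"
  shows "hh (act a b c d (of_real x + \<i> * of_real Y1, \<i> * of_real \<epsilon>)) =
         hh (act a b c d (of_real x + \<i> * of_real Y2, \<i> * of_real \<epsilon>))"
proof -
  obtain a' b' c' d' where n1: "a'*d' - b'*c' = 1" and n2: "c' > 0 \<or> (c' = 0 \<and> d' > 0)"
    and n3: "act a' b' c' d' = act a b c d" using normalize[OF det] by blast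
  show ?thesis using vert_norm[OF n1 n2 eps Y, of x] n3 by simp
qed

end


lemma est:
  assumes det: "A*D - B*C = 1" and Y: "Y > 0" and xY: "2 * \<bar>x\<bar> \<le> Y"
  defines "z1 \<equiv> \<i> * of_real Y" and "z2 \<equiv> of_real x + \<i> * of_real Y"
  shows "cmod (mb A B C D z2 - mb A B C D z1) \<le> 2 * \<bar>x\<bar> * Im (mb A B C D z1) / Y"
    and "cmod ((cnj (jf C D z2) / jf C D z2) / (cnj (jf C D z1) / jf C D z1) - 1) \<le> 4 * \<bar>x\<bar> / Y"
proof -
  have i1: "Im z1 > 0" and i2: "Im z2 > 0" using Y by (simp_all add: z1_def z2_def)
  define j1 where "j1 = jf C D z1"
  define j2 where "j2 = jf C D z2"
  have n1: "j1 \<noteq> 0" and n2: "j2 \<noteq> 0" using jf_nz[OF det i1] jf_nz[OF det i2] by (simp_all add: j1_def j2_def)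
  have m1: "cmod j1 > 0" using n1 by simp
  have j2e: "j2 = j1 + of_real (C * x)" by (simp add: j1_def j2_def jf_def z1_def z2_def algebra_simps)
  have CY: "\<bar>C\<bar> * Y \<le> cmod j1"
  proof -
    have "Im j1 = C * Y" by (simp add: j1_def jf_def z1_def)
    then show ?thesis using abs_Im_le_cmod[of j1] Y by (simp add: abs_mult)
  qed
  have sx: "\<bar>C * x\<bar> \<le> cmod j1 * \<bar>x\<bar> / Y"
  proof -
    have "\<bar>C\<bar> * \<bar>x\<bar> * Y \<le> cmod j1 * \<bar>x\<bar>" using CY
      by (metis mult.commute mult.left_commute mult_left_mono abs_ge_zero)
    then show ?thesis using Y by (simp add: abs_mult field_simps)
  qed
  have half: "cmod j1 * \<bar>x\<bar> / Y \<le> cmod j1 / 2"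
  proof -
    have "cmod j1 * \<bar>x\<bar> * 2 \<le> cmod j1 * Y" using xY m1 by (simp add: mult_left_mono)
    then show ?thesis using Y by (simp add: field_simps)
  qed
  have j2b: "cmod j2 \<ge> cmod j1 / 2"
  proof -
    have "cmod j2 \<ge> cmod j1 - cmod (of_real (C * x) :: complex)"
      unfolding j2e by (metis norm_diff_ineq norm_minus_cancel diff_minus_eq_add)
    moreover have "cmod (of_real (C * x) :: complex) = \<bar>C * x\<bar>" by (simp only: norm_of_real)
    ultimately show ?thesis using sx half by linarith
  qed
  have Iw: "Im (mb A B C D z1) = Y / (cmod j1)^2" using Im_mb[OF det i1] by (simp add: j1_def z1_def)
  have md: "mb A B C D z2 - mb A B C D z1 = of_real x / (j1 * j2)"
    using mb_diff[OF det i1 i2] by (simp add: j1_def j2_def z1_def z2_def)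
  have "cmod (of_real x / (j1 * j2)) = \<bar>x\<bar> / (cmod j1 * cmod j2)" by (simp add: norm_divide norm_mult)
  also have "\<dots> \<le> \<bar>x\<bar> / (cmod j1 * (cmod j1 / 2))"
    using j2b m1 n2 by (intro divide_left_mono mult_left_mono) auto
  also have "\<dots> = 2 * \<bar>x\<bar> * (Y / (cmod j1)^2) / Y" using Y m1 by (simp add: field_simps power2_eq_square)
  finally show "cmod (mb A B C D z2 - mb A B C D z1) \<le> 2 * \<bar>x\<bar> * Im (mb A B C D z1) / Y"
    unfolding md Iw .
  define s where "s = C * x"
  have c1: "cnj j1 \<noteq> 0" using n1 by simp
  have "(cnj j2 / j2) / (cnj j1 / j1) - 1 = (cnj j2 * j1 - j2 * cnj j1) / (j2 * cnj j1)"
    using n1 n2 c1 by (simp add: field_simps)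
  also have "cnj j2 * j1 - j2 * cnj j1 = of_real s * (j1 - cnj j1)"
    unfolding j2e s_def by (simp add: algebra_simps)
  finally have "(cnj j2 / j2) / (cnj j1 / j1) - 1 = of_real s * (j1 - cnj j1) / (j2 * cnj j1)" .
  then have "cmod ((cnj j2 / j2) / (cnj j1 / j1) - 1) = \<bar>s\<bar> * cmod (j1 - cnj j1) / (cmod j2 * cmod j1)"
    by (simp add: norm_divide norm_mult)
  also have "\<dots> \<le> \<bar>s\<bar> * (2 * cmod j1) / ((cmod j1 / 2) * cmod j1)"
  proof (intro frac_le mult_left_mono mult_right_mono)
    show "cmod (j1 - cnj j1) \<le> 2 * cmod j1"
      using norm_triangle_ineq4[of j1 "cnj j1"] by simp
  qed (use j2b m1 in auto)
  also have "\<dots> = 4 * \<bar>s\<bar> / cmod j1" using m1 by (simp add: field_simps)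
  also have "\<dots> \<le> 4 * (cmod j1 * \<bar>x\<bar> / Y) / cmod j1"
    using sx m1 unfolding s_def by (intro divide_right_mono mult_left_mono) auto
  also have "\<dots> = 4 * \<bar>x\<bar> / Y" using m1 by simp
  finally show "cmod ((cnj (jf C D z2) / jf C D z2) / (cnj (jf C D z1) / jf C D z1) - 1) \<le> 4 * \<bar>x\<bar> / Y"
    by (simp add: j1_def j2_def)
qed



lemma act_comp:
  assumes d1: "a*d - b*c = 1" and d2: "a'*d' - b'*c' = 1" and z: "Im z > 0"
  shows "act a b c d (act a' b' c' d' (z, u)) =
         act (a*a' + b*c') (a*b' + b*d') (c*a' + d*c') (c*b' + d*d') (z, u)"
proof -
  define w where "w = mb a' b' c' d' z"
  define J where "J = jf c' d' z"
  have Jn: "J \<noteq> 0" using jf_nz[OF d2 z] by (simp add: J_def)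
  have wi: "Im w > 0" using Im_mb_pos[OF d2 z] by (simp add: w_def)
  have Kn: "jf c d w \<noteq> 0" using jf_nz[OF d1 wi] .
  have wJ: "w * J = of_real a' * z + of_real b'" using Jn by (simp add: w_def J_def mb_def jf_def)
  have jc0: "jf c d w * J = of_real c * (w * J) + of_real d * J" by (simp add: jf_def algebra_simps)
  have jc: "jf c d w * J = jf (c*a' + d*c') (c*b' + d*d') z"
    unfolding jc0 wJ by (simp add: jf_def J_def algebra_simps)
  have mc: "mb a b c d w = mb (a*a' + b*c') (a*b' + b*d') (c*a' + d*c') (c*b' + d*d') z"
  proof -
    have "mb a b c d w = ((of_real a * w + of_real b) * J) / (jf c d w * J)"
      using Jn by (simp add: mb_def jf_def)
    also have "(of_real a * w + of_real b) * J = of_real (a*a' + b*c') * z + of_real (a*b' + b*d')"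
    proof -
    have "(of_real a * w + of_real b) * J = of_real a * (w * J) + of_real b * J" by (simp add: algebra_simps)
    then show ?thesis unfolding wJ by (simp add: J_def jf_def algebra_simps)
  qed
    finally show ?thesis unfolding jc by (simp add: mb_def jf_def)
  qed
  have uc: "u * cnj J / J * cnj (jf c d w) / jf c d w = u * cnj (jf c d w * J) / (jf c d w * J)"
    using Jn Kn by (simp add: field_simps)
  have e1: "act a' b' c' d' (z, u) = (w, u * cnj J / J)" by (simp add: act_def w_def J_def)
  show ?thesis unfolding e1 by (simp only: act_def fst_conv snd_conv mc uc jc)
qed

lemma cis_Arg_unit: assumes "cmod u = 1" shows "cis (Arg u) = u"
proof -
  have "u \<noteq> 0" using assms by auto
  then show ?thesis using cis_Arg[of u] assms by (simp add: sgn_div_norm)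
qed

lemma unit_act: "a*d - b*c = 1 \<Longrightarrow> Im z > 0 \<Longrightarrow> cmod u = 1 \<Longrightarrow> cmod (snd (act a b c d (z, u))) = 1"
  using jf_nz[of a d b c z] by (simp add: act_def norm_divide norm_mult)

context hyp7 begin

lemma gam:
  assumes g: "g \<in> \<Gamma>" and w: "Im w > 0" and u: "cmod u = 1"
  shows "hh (act (g$1$1) (g$1$2) (g$2$1) (g$2$2) (w, u)) = hh (w, u)"
proof -
  let ?j = "jfac g w"
  have jj: "jf (g$2$1) (g$2$2) w = ?j" by (simp add: jf_def jfac_def)
  have mm: "mb (g$1$1) (g$1$2) (g$2$1) (g$2$2) w = mob g w" by (simp add: mb_def mob_def)
  have dg: "det g = 1" using g cf by (auto simp: cocompact_fuchsian_def SL2_def)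
  then have d: "g$1$1 * g$2$2 - g$1$2 * g$2$1 = 1" by (simp add: det_2)
  have jn: "?j \<noteq> 0" using jf_nz[OF d w] jj by simp
  have un: "u \<noteq> 0" using u by auto
  have u2: "cmod (u * cnj ?j / ?j) = 1" using u jn by (simp add: norm_divide norm_mult)
  have c2: "cis (Arg (u * cnj ?j / ?j)) = cis (Arg u) * cnj ?j / ?j"
    using cis_Arg_unit[OF u2] cis_Arg_unit[OF u] by simp
  have "f (mob g w, Arg (u * cnj ?j / ?j), 0) = f (w, Arg u, 0)"
    using gi g w c2 unfolding Gamma_invariant_def by blast
  then show ?thesis unfolding hh_def act_def by (simp add: jj mm)
qed

end


context hyp7 begin

lemma Kdata:
  obtains K m M where "compact K" "\<forall>z. Im z > 0 \<longrightarrow> (\<exists>g\<in>\<Gamma>. mob g z \<in> K)"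
    "m > 0" "\<forall>w\<in>K. m \<le> Im w \<and> Im w \<le> M"
proof -
  obtain K where K: "compact K" "K \<subseteq> upper_half" "\<forall>z\<in>upper_half. \<exists>g\<in>\<Gamma>. mob g z \<in> K"
    using cf unfolding cocompact_fuchsian_def by blast
  have cov: "\<forall>z. Im z > 0 \<longrightarrow> (\<exists>g\<in>\<Gamma>. mob g z \<in> K)" using K(3) by (simp add: upper_half_def)
  have "K \<noteq> {}" using cov[rule_format, of \<i>] by auto
  have ci: "compact (Im ` K)" by (intro compact_continuous_image continuous_intros K(1))
  have ne: "Im ` K \<noteq> {}" using \<open>K \<noteq> {}\<close> by simp
  obtain m where m: "m \<in> Im ` K" "\<forall>t\<in>Im ` K. m \<le> t" using compact_attains_inf[OF ci ne] by blast
  obtain M where M: "M \<in> Im ` K" "\<forall>t\<in>Im ` K. t \<le> M" using compact_attains_sup[OF ci ne] by blast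
  have "m > 0" using m(1) K(2) by (auto simp: upper_half_def)
  then show ?thesis using that[OF K(1) cov] m(2) M(2) by blast
qed

lemma hopf:
  assumes det: "a*d - b*c = 1" and eps: "\<epsilon> = 1 \<or> \<epsilon> = -1"
  shows "hh (act a b c d (of_real x + \<i>, \<i> * of_real \<epsilon>)) = hh (act a b c d (\<i>, \<i> * of_real \<epsilon>))"
proof -
  let ?e = "\<i> * of_real \<epsilon> :: complex"
  have ue: "cmod ?e = 1" using eps by auto
  have V: "hh (act a b c d (of_real x + \<i> * of_real Y, ?e)) = hh (act a b c d (of_real x + \<i>, ?e))" if "Y > 0" for Y
    using vert[OF det eps that zero_less_one, of x] by simp
  have V0: "hh (act a b c d (\<i> * of_real Y, ?e)) = hh (act a b c d (\<i>, ?e))" if "Y > 0" for Y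
    using vert[OF det eps that zero_less_one, of 0] by simp
  obtain K m M where K: "compact K" and cov: "\<forall>z. Im z > 0 \<longrightarrow> (\<exists>g\<in>\<Gamma>. mob g z \<in> K)"
    and m: "m > 0" and mM: "\<forall>w\<in>K. m \<le> Im w \<and> Im w \<le> M" using Kdata by blast
  have M: "M > 0" using cov[rule_format, of \<i>] mM m by force
  define \<eta> where "\<eta> = m / 2"
  have \<eta>: "\<eta> > 0" using m by (simp add: \<eta>_def)
  define K' where "K' = {w + v |w v. w \<in> K \<and> v \<in> cball 0 \<eta>}"
  have cK': "compact K'" unfolding K'_def by (intro compact_sums K compact_cball)
  have K'im: "Im w > 0" if wK: "w \<in> K'" for w
  proof -
    obtain w0 v where w: "w = w0 + v" "w0 \<in> K" "cmod v \<le> \<eta>" using wK by (auto simp: K'_def)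
    have "\<bar>Im v\<bar> \<le> \<eta>" using w(3) abs_Im_le_cmod[of v] by simp
    then show ?thesis using w mM \<eta>_def m by auto
  qed
  define CC where "CC = K' \<times> ({-2*pi..2*pi} \<times> {0::real})"
  have cCC: "compact CC" unfolding CC_def by (intro compact_Times cK' compact_Icc compact_sing)
  have CCM: "CC \<subseteq> Mdom" using K'im by (auto simp: CC_def Mdom_iff)
  have uc: "uniformly_continuous_on CC f"
    by (rule compact_uniformly_continuous[OF continuous_on_subset[OF f_cont CCM] cCC])
  have "\<bar>hh (act a b c d (of_real x + \<i>, ?e)) - hh (act a b c d (\<i>, ?e))\<bar> < e" if e: "e > 0" for e
  proof -
    obtain \<delta> where \<delta>: "\<delta> > 0" and \<delta>u: "\<forall>p\<in>CC. \<forall>q\<in>CC. dist q p < \<delta> \<longrightarrow> dist (f q) (f p) < e"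
      using uc e unfolding uniformly_continuous_on_def by blast
    define \<delta>1 where "\<delta>1 = min (\<delta>/2) (min \<eta> 1)"
    have \<delta>1: "\<delta>1 > 0" "\<delta>1 \<le> \<delta>/2" "\<delta>1 \<le> \<eta>" "\<delta>1 \<le> 1" using \<delta> \<eta> by (auto simp: \<delta>1_def)
    have "isCont Arg 1" by (rule continuous_at_Arg) (auto simp: complex_nonpos_Reals_iff)
    then obtain \<delta>' where \<delta>': "\<delta>' > 0" and \<delta>'u: "\<forall>v. dist v 1 < \<delta>' \<longrightarrow> dist (Arg v) (Arg 1) < \<delta>1"
      using \<delta>1(1) unfolding continuous_at_eps_delta by blast
    have A1: "Arg 1 = 0" by simp
    define Y where "Y = 1 + 4 * \<bar>x\<bar> * (1 + 1/\<delta>' + M/\<delta>1)"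
    have Ypos: "Y > 0" using \<delta>' \<delta>1 M by (simp add: Y_def add_pos_nonneg)
    have xY: "2 * \<bar>x\<bar> \<le> Y" using \<delta>' \<delta>1 M by (simp add: Y_def algebra_simps)
    have Y1: "4 * \<bar>x\<bar> / Y < \<delta>'"
    proof -
      have "4 * \<bar>x\<bar> < \<delta>' * Y" using \<delta>' \<delta>1 M by (simp add: Y_def algebra_simps add_pos_nonneg)
      then show ?thesis using Ypos by (simp add: divide_less_eq mult.commute)
    qed
    have Y2: "2 * \<bar>x\<bar> * M / Y < \<delta>1"
    proof -
      have "2 * \<bar>x\<bar> * M < \<delta>1 * Y" using \<delta>' \<delta>1 M by (simp add: Y_def algebra_simps add_pos_nonneg)
      then show ?thesis using Ypos by (simp add: divide_less_eq mult.commute)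
    qed
    define z1 where "z1 = \<i> * of_real Y"
    define z2 where "z2 = of_real x + \<i> * of_real Y"
    have z1i: "Im z1 > 0" and z2i: "Im z2 > 0" using Ypos by (simp_all add: z1_def z2_def)
    have w0i: "Im (mb a b c d z1) > 0" using Im_mb_pos[OF det z1i] .
    obtain g where g: "g \<in> \<Gamma>" and gK: "mob g (mb a b c d z1) \<in> K" using cov w0i by blast
    define p where "p = g$1$1"
    define q where "q = g$1$2"
    define r where "r = g$2$1"
    define t where "t = g$2$2"
    have dg: "det g = 1" using g cf by (auto simp: cocompact_fuchsian_def SL2_def)
    then have dpq: "p * t - q * r = 1" by (simp add: det_2 p_def q_def r_def t_def)
    define A where "A = p*a + q*c"
    define B where "B = p*b + q*d"
    define C where "C = r*a + t*c"
    define D where "D = r*b + t*d"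
    have dr: "A*D - B*C = 1"
    proof -
      have "A*D - B*C = (p*t - q*r) * (a*d - b*c)" by (simp add: A_def B_def C_def D_def algebra_simps)
      then show ?thesis using dpq det by simp
    qed
    have tr: "hh (act a b c d (z, ?e)) = hh (act A B C D (z, ?e))" if zi: "Im z > 0" for z
    proof -
      obtain w u where wu: "act a b c d (z, ?e) = (w, u)" by (cases "act a b c d (z, ?e)")
      have wi: "Im w > 0" using Im_mb_pos[OF det zi] wu by (simp add: act_def)
      have uu: "cmod u = 1" using unit_act[OF det zi ue] wu by simp
      have "hh (act a b c d (z, ?e)) = hh (act p q r t (act a b c d (z, ?e)))"
        using gam[OF g wi uu] wu by (simp add: p_def q_def r_def t_def)
      also have "\<dots> = hh (act A B C D (z, ?e))"
        using act_comp[OF dpq det zi] by (simp add: A_def B_def C_def D_def)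
      finally show ?thesis .
    qed
    have w1K: "mb A B C D z1 \<in> K"
    proof -
      have "mob g (mb a b c d z1) = mb p q r t (mb a b c d z1)" by (simp add: mb_def mob_def p_def q_def r_def t_def)
      also have "\<dots> = fst (act p q r t (act a b c d (z1, ?e)))" by (simp add: act_def)
      also have "\<dots> = mb A B C D z1" using act_comp[OF dpq det z1i] by (simp add: act_def A_def B_def C_def D_def)
      finally show ?thesis using gK by simp
    qed
    define w1 where "w1 = mb A B C D z1"
    define w2 where "w2 = mb A B C D z2"
    define j1 where "j1 = jf C D z1"
    define j2 where "j2 = jf C D z2"
    define u1 where "u1 = ?e * cnj j1 / j1"
    define u2 where "u2 = ?e * cnj j2 / j2"
    have a1: "act A B C D (z1, ?e) = (w1, u1)" by (simp add: act_def w1_def u1_def j1_def)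
    have a2: "act A B C D (z2, ?e) = (w2, u2)" by (simp add: act_def w2_def u2_def j2_def)
    have n1: "j1 \<noteq> 0" using jf_nz[OF dr z1i] by (simp add: j1_def)
    have n2: "j2 \<noteq> 0" using jf_nz[OF dr z2i] by (simp add: j2_def)
    have en: "?e \<noteq> 0" using ue by auto
    have u1u: "cmod u1 = 1" using n1 ue by (simp add: u1_def norm_divide norm_mult)
    have u2u: "cmod u2 = 1" using n2 ue by (simp add: u2_def norm_divide norm_mult)
    have rat: "u2 / u1 = (cnj j2 / j2) / (cnj j1 / j1)" using en n1 n2 by (simp add: u1_def u2_def field_simps)
    have est1: "cmod (w2 - w1) \<le> 2 * \<bar>x\<bar> * Im w1 / Y"
      using est(1)[OF dr Ypos xY] by (simp add: w1_def w2_def z1_def z2_def)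
    have est2: "cmod (u2 / u1 - 1) \<le> 4 * \<bar>x\<bar> / Y"
      using est(2)[OF dr Ypos xY] unfolding rat by (simp add: j1_def j2_def z1_def z2_def)
    have Iw1: "Im w1 \<le> M" using mM w1K by (simp add: w1_def)
    have dw: "cmod (w2 - w1) < \<delta>1"
    proof -
      have "2 * \<bar>x\<bar> * Im w1 / Y \<le> 2 * \<bar>x\<bar> * M / Y"
        using Iw1 Ypos by (intro divide_right_mono mult_left_mono) auto
      then show ?thesis using est1 Y2 by linarith
    qed
    have dA: "\<bar>Arg (u2 / u1)\<bar> < \<delta>1"
    proof -
      have "dist (u2 / u1) 1 < \<delta>'" using est2 Y1 by (simp add: dist_norm)
      then show ?thesis using \<delta>'u A1 by (simp add: dist_real_def)
    qed
    define \<phi>1 where "\<phi>1 = Arg u1"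
    define \<phi>2 where "\<phi>2 = Arg u1 + Arg (u2 / u1)"
    have P1C: "(w1, \<phi>1, 0) \<in> CC"
    proof -
      have "w1 \<in> K'" unfolding K'_def using w1K \<eta> by (force simp: w1_def)
      moreover have "-2*pi \<le> \<phi>1" "\<phi>1 \<le> 2*pi" using mpi_less_Arg[of u1] Arg_le_pi[of u1] pi_gt_zero
        by (simp_all add: \<phi>1_def)
      ultimately show ?thesis by (simp add: CC_def)
    qed
    have P2C: "(w2, \<phi>2, 0) \<in> CC"
    proof -
      have "w2 = w1 + (w2 - w1)" by simp
      moreover have "cmod (w2 - w1) \<le> \<eta>" using dw \<delta>1 by simp
      ultimately have "w2 \<in> K'" unfolding K'_def using w1K by (force simp: w1_def)
      moreover have "-2*pi \<le> \<phi>2" "\<phi>2 \<le> 2*pi" using mpi_less_Arg[of u1] Arg_le_pi[of u1] pi_gt3 dA \<delta>1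
        by (simp_all add: \<phi>2_def)
      ultimately show ?thesis by (simp add: CC_def)
    qed
    have dP: "dist (w2, \<phi>2, 0::real) (w1, \<phi>1, 0) < \<delta>"
    proof -
      have "dist (w2, \<phi>2, 0::real) (w1, \<phi>1, 0) \<le> dist (w2, \<phi>2, 0::real) (w1, \<phi>2, 0) + dist (w1, \<phi>2, 0::real) (w1, \<phi>1, 0)"
        by (rule dist_triangle)
      also have "dist (w2, \<phi>2, 0::real) (w1, \<phi>2, 0) = cmod (w2 - w1)" by (simp add: dist_Pair_Pair dist_norm)
      also have "dist (w1, \<phi>2, 0::real) (w1, \<phi>1, 0) = \<bar>Arg (u2 / u1)\<bar>" by (simp add: dist_Pair_Pair dist_real_def \<phi>1_def \<phi>2_def)
      finally show ?thesis using dw dA \<delta>1 by linarith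
    qed
    have fd: "\<bar>f (w2, \<phi>2, 0) - f (w1, \<phi>1, 0)\<bar> < e" using \<delta>u P1C P2C dP by (auto simp: dist_real_def)
    have f1: "f (w1, \<phi>1, 0) = hh (w1, u1)" by (simp add: hh_def \<phi>1_def)
    have c2: "cis \<phi>2 = u2"
    proof -
      have "cmod (u2 / u1) = 1" using u1u u2u by (simp add: norm_divide)
      then have "cis \<phi>2 = u1 * (u2 / u1)" unfolding \<phi>2_def using cis_Arg_unit u1u by (simp add: cis_mult[symmetric])
      also have "\<dots> = u2" using u1u by auto
      finally show ?thesis .
    qed
    have w2i: "Im w2 > 0" using Im_mb_pos[OF dr z2i] by (simp add: w2_def)
    have f2: "f (w2, \<phi>2, 0) = hh (w2, u2)" using periodic2[OF w2i c2, of 0] by (simp add: hh_def)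
    have L: "hh (act a b c d (of_real x + \<i>, ?e)) = hh (w2, u2)"
      using V[OF Ypos] tr[OF z2i] a2 by (simp add: z2_def)
    have R: "hh (act a b c d (\<i>, ?e)) = hh (w1, u1)"
      using V0[OF Ypos] tr[OF z1i] a1 by (simp add: z1_def)
    show ?thesis using fd f1 f2 L R by simp
  qed
  note H = this
  show ?thesis
  proof (rule ccontr)
    assume ne: "\<not> ?thesis"
    then have "\<bar>hh (act a b c d (of_real x + \<i>, ?e)) - hh (act a b c d (\<i>, ?e))\<bar> > 0" by simp
    from H[OF this] show False by simp
  qed
qed

end


lemma act_I: "act 1 0 0 1 p = p"
  by (cases p) (simp add: act_def mb_def jf_def)

lemma det_prod: fixes a b c d a' b' c' d' :: real shows "a*d - b*c = 1 \<Longrightarrow> a'*d' - b'*c' = 1 \<Longrightarrow>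
  (a*a' + b*c') * (c*b' + d*d') - (a*b' + b*d') * (c*a' + d*c') = 1"
proof -
  assume "a*d - b*c = 1" "a'*d' - b'*c' = 1"
  moreover have "(a*a' + b*c') * (c*b' + d*d') - (a*b' + b*d') * (c*a' + d*c') = (a*d - b*c) * (a'*d' - b'*c')"
    by algebra
  ultimately show ?thesis by simp
qed

context hyp7 begin

definition HH :: "real \<Rightarrow> real \<Rightarrow> real \<Rightarrow> real \<Rightarrow> real" where
  "HH a b c d = hh (act a b c d (\<i>, \<i>))"

lemma HH_act: assumes "a*d - b*c = 1" "a'*d' - b'*c' = 1"
  shows "HH (a*a' + b*c') (a*b' + b*d') (c*a' + d*c') (c*b' + d*d') = hh (act a b c d (act a' b' c' d' (\<i>, \<i>)))"
  unfolding HH_def using act_comp[OF assms, of \<i> \<i>] by simp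

lemma Rn: assumes det: "a*d - b*c = 1" shows "HH a (a*x + b) c (c*x + d) = HH a b c d"
proof -
  have "HH a (a*x + b) c (c*x + d) = hh (act a b c d (act 1 x 0 1 (\<i>, \<i>)))"
    using HH_act[OF det, of 1 1 x 0] by simp
  also have "act 1 x 0 1 (\<i>, \<i>) = (of_real x + \<i>, \<i> * of_real 1)" by (simp add: act_def mb_def jf_def)
  also have "hh (act a b c d \<dots>) = HH a b c d" unfolding HH_def using hopf[OF det, of 1 x] by simp
  finally show ?thesis .
qed

lemma RD: assumes det: "a*d - b*c = 1" and l: "l > 0" shows "HH (a*l) (b/l) (c*l) (d/l) = HH a b c d"
proof -
  have "HH (a*l) (b/l) (c*l) (d/l) = hh (act a b c d (act l 0 0 (1/l) (\<i>, \<i>)))"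
    using HH_act[OF det, of l "1/l" 0 0] l by simp
  also have "act l 0 0 (1/l) (\<i>, \<i>) = (of_real 0 + \<i> * of_real (l*l), \<i> * of_real 1)"
    using l by (simp add: act_def mb_def jf_def)
  also have "hh (act a b c d \<dots>) = hh (act a b c d (of_real 0 + \<i> * of_real 1, \<i> * of_real 1))"
    using vert[OF det _ _ zero_less_one, of 1 "l*l" 0] l by simp
  also have "\<dots> = HH a b c d" unfolding HH_def by simp
  finally show ?thesis .
qed

lemma Rm: assumes det: "a*d - b*c = 1" shows "HH (a + b*x) b (c + d*x) d = HH a b c d"
proof -
  have d2: "0 * 0 - (-1) * 1 = (1::real)" by simp
  have dn: "1 * 1 - (-x) * 0 = (1::real)" by simp
  have "HH (a + b*x) b (c + d*x) d = hh (act a b c d (act 1 0 x 1 (\<i>, \<i>)))"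
    using HH_act[OF det, of 1 1 0 x] by (simp add: algebra_simps)
  also have "act 1 0 x 1 (\<i>, \<i>) = act 0 (-1) 1 0 (act 1 (-x) 0 1 (\<i>, -\<i>))"
  proof -
    have n1: "of_real x * \<i> + 1 \<noteq> 0" by (simp add: complex_eq_iff)
    have n2: "\<i> - of_real x \<noteq> 0" by (simp add: complex_eq_iff)
    have e: "\<i> / (complex_of_real x * \<i> + 1) = - (1 / (\<i> - complex_of_real x)) \<and>
        \<i> * (1 - complex_of_real x * \<i>) / (complex_of_real x * \<i> + 1) =
        - (\<i> * (- \<i> - complex_of_real x) / (\<i> - complex_of_real x))"
      using n1 n2 by (simp add: field_simps algebra_simps)
    show ?thesis using e by (simp add: act_def mb_def jf_def)
  qed
  also have "hh (act a b c d (act 0 (-1) 1 0 (act 1 (-x) 0 1 (\<i>, -\<i>)))) =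
      hh (act (a*0 + b*1) (a*(-1) + b*0) (c*0 + d*1) (c*(-1) + d*0) (act 1 (-x) 0 1 (\<i>, -\<i>)))"
    using act_comp[OF det d2, of "fst (act 1 (-x) 0 1 (\<i>, -\<i>))" "snd (act 1 (-x) 0 1 (\<i>, -\<i>))"]
    by (simp add: act_def mb_def jf_def)
  also have "act 1 (-x) 0 1 (\<i>, -\<i>) = (of_real (-x) + \<i>, \<i> * of_real (-1))" by (simp add: act_def mb_def jf_def)
  also have "hh (act (a*0 + b*1) (a*(-1) + b*0) (c*0 + d*1) (c*(-1) + d*0) \<dots>) =
      hh (act (a*0 + b*1) (a*(-1) + b*0) (c*0 + d*1) (c*(-1) + d*0) (\<i>, \<i> * of_real (-1)))"
    by (rule hopf) (use det in auto)
  also have "\<dots> = hh (act a b c d (act 0 (-1) 1 0 (\<i>, -\<i>)))"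
    using act_comp[OF det d2, of \<i> "-\<i>"] by simp
  also have "act 0 (-1) 1 0 (\<i>, -\<i>) = (\<i>, \<i>)" by (simp add: act_def mb_def jf_def)
  finally show ?thesis by (simp add: HH_def)
qed

lemma Rneg: "HH (-a) (-b) (-c) (-d) = HH a b c d"
  unfolding HH_def by (simp add: act_neg)

lemma HH_pos: assumes det: "a*d - b*c = 1" and a: "a > 0" shows "HH a b c d = HH 1 0 0 1"
proof -
  have 1: "HH 1 0 (c/a) 1 = HH 1 0 0 1" using Rm[of 1 1 0 0 "c/a"] by simp
  have 2: "HH a 0 c (1/a) = HH 1 0 (c/a) 1" using RD[of 1 1 0 "c/a" a] a by simp
  have 3: "HH a (a*(b/a) + 0) c (c*(b/a) + 1/a) = HH a 0 c (1/a)" using Rn[of a "1/a" 0 c "b/a"] a by simp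
  have "d = c*(b/a) + 1/a" using det a by (simp add: field_simps)
  moreover have "a*(b/a) + 0 = b" using a by simp
  ultimately show ?thesis using 1 2 3 by simp
qed

lemma HH_const: assumes det: "a*d - b*c = 1" shows "HH a b c d = HH 1 0 0 1"
proof -
  have ne: "HH a b c d = HH 1 0 0 1" if d: "a*d - b*c = 1" and a: "a \<noteq> 0" for a b c d
  proof (cases "a > 0")
    case True then show ?thesis using HH_pos[OF d] by simp
  next
    case False
    then have "-a > 0" using a by simp
    moreover have "(-a)*(-d) - (-b)*(-c) = 1" using d by simp
    ultimately show ?thesis using HH_pos Rneg by metis
  qed
  show ?thesis
  proof (cases "a = 0")
    case False then show ?thesis using ne[OF det] by simp
  next
    case True
    then have b: "b \<noteq> 0" using det by auto
    have "HH (a + b*1) b (c + d*1) d = HH a b c d" by (rule Rm[OF det])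
    moreover have "(a + b*1) * d - b * (c + d*1) = 1" using det True by (simp add: algebra_simps)
    ultimately show ?thesis using ne[of "a + b*1" d b "c + d*1"] True b by simp
  qed
qed

end


lemma sin_alpha: "sin (2 * arctan u) = 2 * u / (1 + u^2)"
proof -
  have p: "1 + u^2 > 0" by (simp add: add_pos_nonneg)
  have "sin (2 * arctan u) = 2 * sin (arctan u) * cos (arctan u)" by (rule sin_double)
  also have "\<dots> = 2 * u / (1 + u^2)"
    using p by (simp add: sin_arctan cos_arctan field_simps power2_eq_square del: real_sqrt_mult_self)
      (metis less_numeral_extra(3) p power2_eq_square real_sqrt_pow2 less_imp_le)
  finally show ?thesis .
qed

lemma alpha_range: "0 < 2 * arctan (exp s) \<and> 2 * arctan (exp s) < pi"
  using arctan_ubound[of "exp s"] zero_less_arctan_iff[of "exp s"] by auto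

lemma frame:
  assumes Y: "Im w > 0"
  obtains a b c d where "a*d - b*c = 1" "c > 0 \<or> (c = 0 \<and> d > 0)" "act a b c d (\<i>, \<i>) = (w, cis \<phi>)"
proof -
  define sq where "sq = sqrt (Im w)"
  have sq: "sq > 0" "sq * sq = Im w" using Y by (simp_all add: sq_def)
  define \<theta> where "\<theta> = (pi/2 - \<phi>)/2"
  have dk: "cos \<theta> * cos \<theta> - (- sin \<theta>) * sin \<theta> = 1" by (simp add: power2_eq_square[symmetric])
  have dS: "sq * (1/sq) - (Re w / sq) * 0 = 1" using sq by simp
  have cn: "cis \<theta> \<noteq> 0" by simp
  have jk: "jf (sin \<theta>) (cos \<theta>) \<i> = cis \<theta>" by (simp add: jf_def complex_eq_iff)
  have num: "of_real (cos \<theta>) * \<i> + of_real (- sin \<theta>) = \<i> * cis \<theta>" by (simp add: complex_eq_iff)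
  have mk: "mb (cos \<theta>) (- sin \<theta>) (sin \<theta>) (cos \<theta>) \<i> = \<i>"
    unfolding mb_def using num jk cn by (simp add: jf_def)
  have uk: "\<i> * cnj (cis \<theta>) / cis \<theta> = cis \<phi>"
  proof -
    have "\<i> * cnj (cis \<theta>) / cis \<theta> = cis (pi/2) * cis (-\<theta>) / cis \<theta>" by (simp add: cis_cnj)
    also have "\<dots> = cis (pi/2 + -\<theta> - \<theta>)" by (simp only: cis_mult cis_divide)
    also have "pi/2 + -\<theta> - \<theta> = \<phi>" by (simp add: \<theta>_def)
    finally show ?thesis .
  qed
  have ak: "act (cos \<theta>) (- sin \<theta>) (sin \<theta>) (cos \<theta>) (\<i>, \<i>) = (\<i>, cis \<phi>)"
    unfolding act_def using mk jk uk by simp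
  have aS: "act sq (Re w / sq) 0 (1/sq) (\<i>, cis \<phi>) = (w, cis \<phi>)"
  proof -
    have "mb sq (Re w / sq) 0 (1/sq) \<i> = w" using sq
      by (simp add: mb_def complex_eq_iff field_simps)
    moreover have "jf 0 (1/sq) \<i> = of_real (1/sq)" by (simp add: jf_def)
    ultimately show ?thesis unfolding act_def using sq by simp
  qed
  define a where "a = sq * cos \<theta> + (Re w / sq) * sin \<theta>"
  define b where "b = sq * (- sin \<theta>) + (Re w / sq) * cos \<theta>"
  define c where "c = 0 * cos \<theta> + (1/sq) * sin \<theta>"
  define d where "d = 0 * (- sin \<theta>) + (1/sq) * cos \<theta>"
  have det: "a*d - b*c = 1" unfolding a_def b_def c_def d_def by (rule det_prod[OF dS dk])
  have "act a b c d (\<i>, \<i>) = act sq (Re w / sq) 0 (1/sq) (act (cos \<theta>) (- sin \<theta>) (sin \<theta>) (cos \<theta>) (\<i>, \<i>))"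
    unfolding a_def b_def c_def d_def using act_comp[OF dS dk, of \<i> \<i>] by simp
  also have "\<dots> = (w, cis \<phi>)" using ak aS by simp
  finally have A: "act a b c d (\<i>, \<i>) = (w, cis \<phi>)" .
  obtain a' b' c' d' where "a'*d' - b'*c' = 1" "c' > 0 \<or> (c' = 0 \<and> d' > 0)" "act a' b' c' d' = act a b c d"
    using normalize[OF det] by blast
  then show ?thesis using that A by metis
qed

context hyp7 begin

lemma t0: assumes "Im w > 0" shows "f (w, \<phi>, 0) = HH 1 0 0 1"
proof -
  obtain a b c d where det: "a*d - b*c = 1" and A: "act a b c d (\<i>, \<i>) = (w, cis \<phi>)"
    using frame[OF assms] by blast
  have "f (w, \<phi>, 0) = f (w, Arg (cis \<phi>), 0)" using periodic2[OF assms refl] .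
  also have "\<dots> = HH a b c d" unfolding HH_def hh_def A by simp
  also have "\<dots> = HH 1 0 0 1" by (rule HH_const[OF det])
  finally show ?thesis .
qed

lemma allpts: assumes z: "Im z > 0" shows "f (z, \<phi>, t) = HH 1 0 0 1"
proof -
  obtain a b c d where det: "a*d - b*c = 1" and nrm: "c > 0 \<or> (c = 0 \<and> d > 0)"
    and A: "act a b c d (\<i>, \<i>) = (z, cis \<phi>)" using frame[OF z] by blast
  have ii: "Im \<i> > 0" by simp
  have A1: "mb a b c d \<i> = z" and A2: "\<i> * cnj (jf c d \<i>) / jf c d \<i> = cis \<phi>"
    using A by (simp_all add: act_def)
  have "f (Ls a b c d (\<i>, pi/2, t)) = f (z, Arg (cis \<phi>), t)"
    using Ls_point[OF det ii, of "pi/2" t] A1 A2 by simp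
  also have "\<dots> = f (z, \<phi>, t)" using periodic2[OF z refl] by simp
  finally have P0: "f (Ls a b c d (\<i>, pi/2, t)) = f (z, \<phi>, t)" .
  define \<alpha> where "\<alpha> = (\<lambda>s::real. 2 * arctan (exp s))"
  define \<gamma> where "\<gamma> = (\<lambda>s. (cis (\<alpha> s), \<alpha> s, t - s))"
  have ad: "(\<alpha> has_real_derivative sin (\<alpha> s)) (at s)" for s
  proof -
    have "(\<alpha> has_real_derivative 2 * (inverse (1 + (exp s)^2) * exp s)) (at s)"
      unfolding \<alpha>_def by (auto intro!: derivative_eq_intros)
    moreover have "2 * (inverse (1 + (exp s)^2) * exp s) = sin (\<alpha> s)"
      by (simp add: \<alpha>_def sin_alpha field_simps)
    ultimately show ?thesis by simp
  qed
  have sp: "sin (\<alpha> s) > 0" for s using alpha_range[of s] by (simp add: \<alpha>_def sin_gt_zero)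
  have gim: "Im (fst (\<gamma> s)) > 0" for s using sp by (simp add: \<gamma>_def)
  have gd: "(\<gamma> has_vector_derivative (0 *\<^sub>R Xv (\<gamma> s) + 1 *\<^sub>R Yv (\<gamma> s) + (-1) *\<^sub>R Tv)) (at s)" for s
  proof -
    have c1: "((\<lambda>s. cis (\<alpha> s)) has_vector_derivative (sin (\<alpha> s) *\<^sub>R (\<i> * cis (\<alpha> s)))) (at s)"
    proof -
      have e: "(\<lambda>h. h * sin (\<alpha> s)) = (*) (sin (\<alpha> s))" by (rule ext) simp
      have "(\<alpha> has_derivative (\<lambda>h. h * sin (\<alpha> s))) (at s)"
        using ad[of s] unfolding e by (simp add: has_field_derivative_def)
      from has_derivative_cis[OF this] show ?thesis
        by (simp add: has_vector_derivative_def scaleR_scaleR mult.commute)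
    qed
    have c2: "(\<alpha> has_vector_derivative sin (\<alpha> s)) (at s)"
      using ad[of s] by (simp add: has_real_derivative_iff_has_vector_derivative)
    have c3: "((\<lambda>s. t - s) has_vector_derivative (-1)) (at s)"
      by (auto intro!: derivative_eq_intros simp: has_real_derivative_iff_has_vector_derivative[symmetric])
    have "(\<gamma> has_vector_derivative (sin (\<alpha> s) *\<^sub>R (\<i> * cis (\<alpha> s)), sin (\<alpha> s), -1)) (at s)"
      unfolding \<gamma>_def by (intro has_vector_derivative_Pair c1 c2 c3)
    moreover have "0 *\<^sub>R Xv (\<gamma> s) + 1 *\<^sub>R Yv (\<gamma> s) + (-1) *\<^sub>R Tv = (sin (\<alpha> s) *\<^sub>R (\<i> * cis (\<alpha> s)), sin (\<alpha> s), -1)"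
      by (simp add: \<gamma>_def Yv_def Tv_def scaleR_conv_of_real)
    ultimately show ?thesis by simp
  qed
  let ?L = "\<lambda>s. Ls a b c d (\<gamma> s)"
  have Ld: "(?L has_vector_derivative (0 *\<^sub>R Xv (?L s) + 1 *\<^sub>R (Yv (?L s) - Tv))) (at s)" for s
    using push[OF det nrm gd gim] by (simp add: algebra_simps)
  have Lm: "?L s \<in> Mdom" for s
    using Im_mb_pos[OF det gim] by (simp add: Mdom_iff Ls_def)
  have Lt: "(0::real) = 0 \<or> snd (snd (?L s)) = 0" for s by simp
  have fc: "f (?L 0) = f (?L t)"
    by (rule flow_const[of ?L "\<lambda>_. 0" "\<lambda>_. 1", OF Lm Ld Lt])
  have g0: "\<gamma> 0 = (\<i>, pi/2, t)" by (simp add: \<gamma>_def \<alpha>_def complex_eq_iff)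
  have "f (?L t) = HH 1 0 0 1"
  proof -
    have "?L t = (mb a b c d (cis (\<alpha> t)), \<alpha> t - 2 * Im (Ln (jf c d (cis (\<alpha> t)))), 0)"
      by (simp add: Ls_def \<gamma>_def)
    moreover have "Im (mb a b c d (cis (\<alpha> t))) > 0" using Im_mb_pos[OF det gim[of t]] by (simp add: \<gamma>_def)
    ultimately show ?thesis using t0 by simp
  qed
  then show ?thesis using fc g0 P0 by simp
qed

end

theorem mainTheorem7:
  fixes \<Gamma> :: "(real^2^2) set" and f :: "complex \<times> real \<times> real \<Rightarrow> real"
  assumes "cocompact_fuchsian \<Gamma>"
    and "Cinf_on Mdom f"
    and "Gamma_invariant \<Gamma> f"
    and "\<forall>p\<in>Mdom. dderiv f p (Xv p) + tanh (snd (snd p)) * dderiv f p Zv = 0"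
    and "\<forall>p\<in>Mdom. dderiv f p (Yv p) - dderiv f p Tv = 0"
  shows "\<exists>c. \<forall>p\<in>Mdom. f p = c"
proof -
  interpret hyp7 \<Gamma> f using assms by (unfold_locales)
  have "\<forall>p\<in>Mdom. f p = HH 1 0 0 1"
  proof
    fix p assume "p \<in> Mdom"
    then obtain z \<phi> t where p: "p = (z, \<phi>, t)" "Im z > 0" by (cases p) (auto simp: Mdom_iff)
    show "f p = HH 1 0 0 1" using allpts[OF p(2)] p(1) by simp
  qed
  then show ?thesis by blast
qed

end
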